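(* Let $\widetilde\Delta$ be a graph without isolated vertices, let $\ell:D(\widetilde\Delta)\to N$ be a voltage assignment, and let $\widetilde\Gamma$ be the lift of $\widetilde\Delta$ with respect to $\ell$. Then the following are equivalent: (i) for all $u,v,w\in V(\widetilde\Delta)$ with $u\sim v$ and $v\perp w$ we have $\ell(w,u)=\ell(w,v)$; (ii) for all $(u,m),(v,n)\in V(\widetilde\Gamma)$, we have $(u,m)\sim(v,n)$ if and only if $m=n$ and $u\sim v$.
   Context: Graphs are simple and undirected; $u\perp v$ denotes adjacency and $D(\Delta)$ is the set of darts (ordered pairs of adjacent vertices). A voltage assignment is a map $\ell:D(\Delta)\to N$ into a group with $\ell(u,v)=\ell(v,u)^{-1}$; the lift has vertex set $V(\Delta)\times N$ with $(u,m)\perp(v,n)$ iff $u\perp v$ and $\ell(u,v)=mn^{-1}$. In any graph, $u\sim v$ means that $u$ and $v$ have the same set of neighbours. *)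

theory Defs
  imports Main
begin

definition simple_graph :: "'a set \<Rightarrow> ('a \<Rightarrow> 'a \<Rightarrow> bool) \<Rightarrow> bool" where
  "simple_graph V E \<longleftrightarrow>
     (\<forall>u v. E u v \<longrightarrow> u \<in> V \<and> v \<in> V) \<and>
     (\<forall>u v. E u v \<longrightarrow> E v u) \<and>
     (\<forall>u. \<not> E u u)"

definition no_isolated :: "'a set \<Rightarrow> ('a \<Rightarrow> 'a \<Rightarrow> bool) \<Rightarrow> bool" where
  "no_isolated V E \<longleftrightarrow> (\<forall>u\<in>V. \<exists>v. E u v)"

text \<open>Voltage assignment into a group (written additively, not necessarily
  commutative): l(u,v) = l(v,u)^{-1} on every dart (u,v).\<close>
definition voltage :: "('a \<Rightarrow> 'a \<Rightarrow> bool) \<Rightarrow> ('a \<Rightarrow> 'a \<Rightarrow> 'g::group_add) \<Rightarrow> bool" where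
  "voltage E l \<longleftrightarrow> (\<forall>u v. E u v \<longrightarrow> l u v = - l v u)"

text \<open>Adjacency of the lift: (u,m) adjacent (v,n) iff u adj v and l(u,v) = m n^{-1}.
  Vertex set of the lift is V \<times> UNIV.\<close>
definition lift_adj :: "('a \<Rightarrow> 'a \<Rightarrow> bool) \<Rightarrow> ('a \<Rightarrow> 'a \<Rightarrow> 'g::group_add)
    \<Rightarrow> 'a \<times> 'g \<Rightarrow> 'a \<times> 'g \<Rightarrow> bool" where
  "lift_adj E l x y \<longleftrightarrow> E (fst x) (fst y) \<and> l (fst x) (fst y) = snd x + - snd y"

definition same_nbhd :: "('a \<Rightarrow> 'a \<Rightarrow> bool) \<Rightarrow> 'a \<Rightarrow> 'a \<Rightarrow> bool" where
  "same_nbhd E u v \<longleftrightarrow> {w. E u w} = {w. E v w}"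

end

theory Submission
  imports Defs
begin

lemma grp_aux: "((a::'g::group_add) = m + - k) \<longleftrightarrow> (k = - a + m)"
  by (metis add.assoc add.left_inverse add_0 add_minus_cancel minus_add_cancel)

lemma lift_adj_iff:
  "lift_adj E l (u,m) (w,k) \<longleftrightarrow> E u w \<and> k = - l u w + m"
  unfolding lift_adj_def using grp_aux by auto

lemma same_nbhd_iff: "same_nbhd E u v \<longleftrightarrow> (\<forall>w. E u w \<longleftrightarrow> E v w)"
  unfolding same_nbhd_def by auto

theorem lemma2p4:
  fixes V :: "'a set" and E :: "'a \<Rightarrow> 'a \<Rightarrow> bool" and l :: "'a \<Rightarrow> 'a \<Rightarrow> 'g::group_add"
  assumes "simple_graph V E" and "no_isolated V E" and "voltage E l"
  shows "(\<forall>u\<in>V. \<forall>v\<in>V. \<forall>w\<in>V. same_nbhd E u v \<and> E v w \<longrightarrow> l w u = l w v)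
     \<longleftrightarrow> (\<forall>x\<in>V \<times> UNIV. \<forall>y\<in>V \<times> UNIV.
            same_nbhd (lift_adj E l) x y \<longleftrightarrow> snd x = snd y \<and> same_nbhd E (fst x) (fst y))"
proof
  have sym: "\<And>u v. E u v \<Longrightarrow> E v u" and inV: "\<And>u v. E u v \<Longrightarrow> u \<in> V \<and> v \<in> V"
    using assms(1) unfolding simple_graph_def by auto
  have volt: "\<And>u v. E u v \<Longrightarrow> l u v = - l v u" using assms(3) unfolding voltage_def by auto
  assume I: "\<forall>u\<in>V. \<forall>v\<in>V. \<forall>w\<in>V. same_nbhd E u v \<and> E v w \<longrightarrow> l w u = l w v"
  have L: "l u w = l v w" if "u \<in> V" "v \<in> V" "same_nbhd E u v" "E v w" for u v w
  proof -
    have "E u w" using that by (auto simp: same_nbhd_iff)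
    have "l w u = l w v" using I that inV by blast
    then show ?thesis using volt[OF \<open>E u w\<close>] volt[OF \<open>E v w\<close>] by simp
  qed
  show "\<forall>x\<in>V \<times> UNIV. \<forall>y\<in>V \<times> UNIV.
            same_nbhd (lift_adj E l) x y \<longleftrightarrow> snd x = snd y \<and> same_nbhd E (fst x) (fst y)"
  proof (intro ballI)
    fix x y assume x: "x \<in> V \<times> (UNIV::'g set)" and y: "y \<in> V \<times> (UNIV::'g set)"
    obtain u m where xe: "x = (u,m)" by force
    obtain v n where ye: "y = (v,n)" by force
    have u: "u \<in> V" and v: "v \<in> V" using x y xe ye by auto
    show "same_nbhd (lift_adj E l) x y \<longleftrightarrow> snd x = snd y \<and> same_nbhd E (fst x) (fst y)"
    proof
      assume S: "same_nbhd (lift_adj E l) x y"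
      have S': "\<And>w k. (E u w \<and> k = - l u w + m) \<longleftrightarrow> (E v w \<and> k = - l v w + n)"
        using S unfolding same_nbhd_iff xe ye by (metis lift_adj_iff)
      have N: "same_nbhd E u v" unfolding same_nbhd_iff
      proof
        fix w show "E u w \<longleftrightarrow> E v w"
          using S'[of w "- l u w + m"] S'[of w "- l v w + n"] by blast
      qed
      obtain w where "E u w" using assms(2) u unfolding no_isolated_def by auto
      then have "E v w" and eq: "- l u w + m = - l v w + n" using S'[of w "- l u w + m"] by auto
      have "l u w = l v w" using L[OF u v N \<open>E v w\<close>] .
      then have "m = n" using eq by simp
      then show "snd x = snd y \<and> same_nbhd E (fst x) (fst y)" using N xe ye by simp
    next
      assume "snd x = snd y \<and> same_nbhd E (fst x) (fst y)"
      then have mn: "m = n" and N: "same_nbhd E u v" using xe ye by auto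
      have "\<And>w. E u w \<longleftrightarrow> E v w" using N by (simp add: same_nbhd_iff)
      moreover have "\<And>w. E v w \<Longrightarrow> l u w = l v w" using L[OF u v N] .
      ultimately show "same_nbhd (lift_adj E l) x y"
        unfolding same_nbhd_iff xe ye using mn
        by (auto simp: lift_adj_iff)
    qed
  qed
next
  have sym: "\<And>u v. E u v \<Longrightarrow> E v u" 
    using assms(1) unfolding simple_graph_def by auto
  have volt: "\<And>u v. E u v \<Longrightarrow> l u v = - l v u" using assms(3) unfolding voltage_def by auto
  assume II: "\<forall>x\<in>V \<times> UNIV. \<forall>y\<in>V \<times> UNIV.
            same_nbhd (lift_adj E l) x y \<longleftrightarrow> snd x = snd y \<and> same_nbhd E (fst x) (fst y)"
  show "\<forall>u\<in>V. \<forall>v\<in>V. \<forall>w\<in>V. same_nbhd E u v \<and> E v w \<longrightarrow> l w u = l w v"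
  proof (intro ballI impI)
    fix u v w assume u: "u \<in> V" and v: "v \<in> V" and "w \<in> V" and h: "same_nbhd E u v \<and> E v w"
    have "same_nbhd (lift_adj E l) (u, 0::'g) (v, 0)" using II u v h by auto
    then have S': "\<And>w k. (E u w \<and> k = - l u w) \<longleftrightarrow> (E v w \<and> k = - l v w)"
      unfolding same_nbhd_iff by (metis lift_adj_iff add_0_right)
    have "E u w" using h by (auto simp: same_nbhd_iff)
    then have "l u w = l v w" using S'[of w "- l u w"] by auto
    then show "l w u = l w v" using volt[OF \<open>E u w\<close>] volt[of v w] h
      by (metis minus_minus)
  qed
qed

end
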